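(* Fix $s\in\mathbb Z_p^*$ and $k$ with $2^k\le\frac{p-1}{2}$, and let $\Delta=\frac{2^{k+1}}{p-1}$. For $x\in\mathbb Z_p^*$ let $\tilde x=(\hat x,1)/\sqrt2\in\mathbb R^{4^n+1}$ and $y=f_s(x)$. Then: (1) $\|\tilde x\|_2=1$ for all $x\in\mathbb Z_p^*$; (2) there exists $w\in\mathbb R^{4^n+1}$ with $\|w\|_2=1$ such that $\Pr_{x\sim\mathbb Z_p^*}\big[y\langle w,\tilde x\rangle\ge \frac{\Delta}{\sqrt{8+2\Delta^2}}\big]\ge 1-\Delta$ ($x$ uniform); (3) for this same $w$, $|y\langle w,\tilde x\rangle|\le\frac{\Delta}{\sqrt{8+2\Delta^2}}$ for every $x\in\mathbb Z_p^*$; (4) $\langle\tilde x,\tilde x'\rangle=\frac12\big(1+|\langle\phi(x)|\phi(x')\rangle|^2\big)$ for all $x,x'$. Consequently $w^*=\frac{\sqrt{8+2\Delta^2}}{\Delta}w$ satisfies $\Pr_x[y\langle w^*,\tilde x\rangle\ge1]\ge1-\Delta$, $|y\langle w^*,\tilde x\rangle|\le 1$ for all $x$, and $\|w^*\|_2=O(\Delta^{-1})$.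
   Context: Let $p$ be an odd prime, $n=\lceil\log_2 p\rceil$, $g$ a generator of $\mathbb Z_p^*$; $\log_g x$ is the exponent modulo $p-1$ with $g^{\log_g x}\equiv x\pmod p$. For $s\in\mathbb Z_p^*$, $f_s(x)=+1$ if $\log_g x\in\{s,\dots,s+\frac{p-3}{2}\}$ (indices mod $p-1$), else $-1$. Feature state: $|\phi(x)\rangle=2^{-k/2}\sum_{i=0}^{2^k-1}|x\cdot g^i\bmod p\rangle$. For a Hermitian $2^n\times2^n$ matrix $W$, its Pauli vector is $(2^{-n/2}\mathrm{Tr}[\sigma_qW])_{q\in\{0,1,2,3\}^n}\in\mathbb R^{4^n}$, $\sigma_q$ the $n$-qubit Pauli tensor products; $\hat x$ denotes the Pauli vector of $|\phi(x)\rangle\langle\phi(x)|$. *)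

theory Defs
  imports "HOL-Analysis.Analysis" "HOL-Number_Theory.Number_Theory"
begin

definition dlog :: "nat \<Rightarrow> nat \<Rightarrow> nat \<Rightarrow> nat" where
  "dlog p g x = (THE e. e < p - 1 \<and> [g ^ e = x] (mod p))"

definition f_s :: "nat \<Rightarrow> nat \<Rightarrow> nat \<Rightarrow> nat \<Rightarrow> real" where
  "f_s p g s x = (if \<exists>i \<le> (p - 3) div 2. (s + i) mod (p - 1) = dlog p g x then 1 else -1)"

(* amplitude of |phi(x)> = 2^{-k/2} sum_{i<2^k} |x g^i mod p> on basis state |j> *)
definition phi :: "nat \<Rightarrow> nat \<Rightarrow> nat \<Rightarrow> nat \<Rightarrow> nat \<Rightarrow> complex" where
  "phi p g k x j = (\<Sum>i<2^k. if (x * g ^ i) mod p = j then (1::complex) else 0) / complex_of_real (sqrt (2 ^ k))"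

definition braket :: "nat \<Rightarrow> nat \<Rightarrow> nat \<Rightarrow> nat \<Rightarrow> nat \<Rightarrow> nat \<Rightarrow> complex" where
  "braket n p g k x x' = (\<Sum>j<2^n. cnj (phi p g k x j) * phi p g k x' j)"

definition pauli1 :: "nat \<Rightarrow> nat \<Rightarrow> nat \<Rightarrow> complex" where
  "pauli1 q a b =
     (if q = 0 then (if a = b then 1 else 0)
      else if q = 1 then (if a \<noteq> b then 1 else 0)
      else if q = 2 then (if a = 0 \<and> b = 1 then - \<i> else if a = 1 \<and> b = 0 then \<i> else 0)
      else (if a = b then (if a = 0 then 1 else -1) else 0))"

definition bit_of :: "nat \<Rightarrow> nat \<Rightarrow> nat" where
  "bit_of a j = (a div 2 ^ j) mod 2"

(* n-qubit Pauli product sigma_q, q \<in> {0,1,2,3}^n encoded as m < 4^n via base-4 digits *)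
definition pauli_n :: "nat \<Rightarrow> nat \<Rightarrow> nat \<Rightarrow> nat \<Rightarrow> complex" where
  "pauli_n n m a b = (\<Prod>j<n. pauli1 ((m div 4 ^ j) mod 4) (bit_of a j) (bit_of b j))"

definition trace_prod :: "nat \<Rightarrow> (nat \<Rightarrow> nat \<Rightarrow> complex) \<Rightarrow> (nat \<Rightarrow> nat \<Rightarrow> complex) \<Rightarrow> complex" where
  "trace_prod n A W = (\<Sum>a<2^n. \<Sum>b<2^n. A a b * W b a)"

(* Pauli vector of a Hermitian 2^n x 2^n matrix W: coordinates 2^{-n/2} Tr[sigma_q W], q < 4^n
   (real for Hermitian W; we take the real part to land in R^{4^n}) *)
definition pauli_vec :: "nat \<Rightarrow> (nat \<Rightarrow> nat \<Rightarrow> complex) \<Rightarrow> nat \<Rightarrow> real" where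
  "pauli_vec n W m = Re (trace_prod n (pauli_n n m) W) / sqrt (2 ^ n)"

definition rho :: "nat \<Rightarrow> nat \<Rightarrow> nat \<Rightarrow> nat \<Rightarrow> nat \<Rightarrow> nat \<Rightarrow> complex" where
  "rho p g k x a b = phi p g k x a * cnj (phi p g k x b)"

definition xtilde :: "nat \<Rightarrow> nat \<Rightarrow> nat \<Rightarrow> nat \<Rightarrow> nat \<Rightarrow> nat \<Rightarrow> real" where
  "xtilde n p g k x i = (if i < 4 ^ n then pauli_vec n (rho p g k x) i else if i = 4 ^ n then 1 else 0) / sqrt 2"

definition vinner :: "nat \<Rightarrow> (nat \<Rightarrow> real) \<Rightarrow> (nat \<Rightarrow> real) \<Rightarrow> real" where
  "vinner d v u = (\<Sum>i<d. v i * u i)"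

definition vnorm :: "nat \<Rightarrow> (nat \<Rightarrow> real) \<Rightarrow> real" where
  "vnorm d v = sqrt (\<Sum>i<d. (v i)\<^sup>2)"

definition prob_units :: "nat \<Rightarrow> (nat \<Rightarrow> bool) \<Rightarrow> real" where
  "prob_units p P = real (card {x \<in> {1..p - 1}. P x}) / real (p - 1)"

end

theory Submission
  imports Defs
begin

lemma pauli1_cnj: "cnj (pauli1 q a b) = pauli1 q b a"
  by (auto simp: pauli1_def)

lemma pauli1_complete:
  assumes "a < 2" "b < 2" "c < 2" "d < 2"
  shows "(\<Sum>q<4. pauli1 q a b * cnj (pauli1 q c d)) = (if a = c \<and> b = d then 2 else 0)"
proof -
  have "a = 0 \<or> a = 1" "b = 0 \<or> b = 1" "c = 0 \<or> c = 1" "d = 0 \<or> d = 1" using assms by auto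
  then show ?thesis
    by (auto simp: pauli1_def eval_nat_numeral complex_eq_iff)
qed

lemma sum_split4:
  fixes h :: "nat \<Rightarrow> 'a::comm_monoid_add" and N :: nat
  shows "(\<Sum>m<4*N. h m) = (\<Sum>m'<N. \<Sum>r<4. h (4*m' + r))"
  by (induction N) (simp_all add: eval_nat_numeral add_ac)

lemma digits_sum_prod:
  fixes F :: "nat \<Rightarrow> nat \<Rightarrow> 'a::comm_semiring_1"
  shows "(\<Sum>m<4^n. \<Prod>j<n. F j ((m div 4^j) mod 4)) = (\<Prod>j<n. \<Sum>q<4. F j q)"
proof (induction n arbitrary: F)
  case 0
  then show ?case by simp
next
  case (Suc n)
  have dig: "((4*m' + r) div (4 * 4 ^ j)) mod 4 = (m' div 4^j) mod 4" if "r < 4" for m' r j :: nat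
  proof -
    have "(4*m' + r) div (4 * 4 ^ j) = ((4*m'+r) div 4) div 4^j" by (simp add: div_mult2_eq)
    also have "(4*m'+r) div 4 = m'" using that by simp
    finally show ?thesis by simp
  qed
  have "(\<Sum>m<4^Suc n. \<Prod>j<Suc n. F j ((m div 4^j) mod 4))
      = (\<Sum>m'<4^n. \<Sum>r<4. \<Prod>j<Suc n. F j (((4*m'+r) div 4^j) mod 4))"
    by (simp add: sum_split4)
  also have "\<dots> = (\<Sum>m'<4^n. \<Sum>r<4. F 0 r * (\<Prod>j<n. F (Suc j) ((m' div 4^j) mod 4)))"
    by (intro sum.cong refl) (simp only: prod.lessThan_Suc_shift, simp add: dig)
  also have "\<dots> = (\<Sum>m'<4^n. (\<Sum>r<4. F 0 r) * (\<Prod>j<n. F (Suc j) ((m' div 4^j) mod 4)))"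
    by (simp add: sum_distrib_right)
  also have "\<dots> = (\<Sum>r<4. F 0 r) * (\<Prod>j<n. \<Sum>q<4. F (Suc j) q)"
    using Suc.IH[of "\<lambda>j. F (Suc j)"] by (simp add: sum_distrib_left[symmetric])
  also have "\<dots> = (\<Prod>j<Suc n. \<Sum>q<4. F j q)"
    by (simp only: prod.lessThan_Suc_shift)
  finally show ?case .
qed

lemma bit_of_lt: "bit_of a j < 2" by (simp add: bit_of_def)

lemma bits_eq: "a < 2^n \<Longrightarrow> c < 2^n \<Longrightarrow> (\<forall>j<n. bit_of a j = bit_of c j) \<Longrightarrow> a = c"
proof (induction n arbitrary: a c)
  case 0
  then show ?case by simp
next
  case (Suc n)
  have s: "bit_of x (Suc j) = bit_of (x div 2) j" for x j
    by (simp add: bit_of_def div_mult2_eq)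
  have "a div 2 = c div 2"
    using Suc.prems by (intro Suc.IH) (auto simp: s)
  moreover have "a mod 2 = c mod 2"
    using Suc.prems(3) by (auto simp: bit_of_def)
  ultimately show ?case by (metis div_mult_mod_eq)
qed

lemma pauli_n_cnj: "cnj (pauli_n n m a b) = pauli_n n m b a"
  by (simp add: pauli_n_def cnj_prod pauli1_cnj)

lemma pauli_complete:
  assumes "a < 2^n" "b < 2^n" "c < 2^n" "d < 2^n"
  shows "(\<Sum>m<4^n. pauli_n n m a b * cnj (pauli_n n m c d)) = (if a = c \<and> b = d then 2^n else 0)"
proof -
  have "(\<Sum>m<4^n. pauli_n n m a b * cnj (pauli_n n m c d))
      = (\<Sum>m<4^n. \<Prod>j<n. (\<lambda>j q. pauli1 q (bit_of a j) (bit_of b j) * cnj (pauli1 q (bit_of c j) (bit_of d j))) j ((m div 4^j) mod 4))"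
    by (simp add: pauli_n_def cnj_prod prod.distrib)
  also have "\<dots> = (\<Prod>j<n. \<Sum>q<4. pauli1 q (bit_of a j) (bit_of b j) * cnj (pauli1 q (bit_of c j) (bit_of d j)))"
    by (rule digits_sum_prod)
  also have "\<dots> = (\<Prod>j<n. if bit_of a j = bit_of c j \<and> bit_of b j = bit_of d j then 2 else 0)"
    by (simp add: pauli1_complete bit_of_lt)
  also have "\<dots> = (if a = c \<and> b = d then 2^n else 0)"
  proof (cases "a = c \<and> b = d")
    case True
    then show ?thesis by simp
  next
    case False
    then have "\<exists>j<n. \<not> (bit_of a j = bit_of c j \<and> bit_of b j = bit_of d j)"
      using bits_eq[of a n c] bits_eq[of b n d] assms by blast
    then show ?thesis using False by (auto intro: prod_zero)
  qed
  finally show ?thesis .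
qed

definition herm :: "(nat \<Rightarrow> nat \<Rightarrow> complex) \<Rightarrow> bool" where
  "herm W \<longleftrightarrow> (\<forall>a b. W b a = cnj (W a b))"

lemma trace_real:
  assumes "herm W"
  shows "cnj (trace_prod n (pauli_n n m) W) = trace_prod n (pauli_n n m) W"
proof -
  have h: "cnj (W b a) = W a b" for a b using assms unfolding herm_def by (metis complex_cnj_cnj)
  have "cnj (trace_prod n (pauli_n n m) W) = (\<Sum>a<2^n. \<Sum>b<2^n. pauli_n n m b a * W a b)"
    by (simp add: trace_prod_def pauli_n_cnj h)
  also have "\<dots> = trace_prod n (pauli_n n m) W"
    unfolding trace_prod_def by (rule sum.swap)
  finally show ?thesis .
qed

lemma trace_Im:
  assumes "herm W" shows "Im (trace_prod n (pauli_n n m) W) = 0"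
proof -
  have "Im (cnj (trace_prod n (pauli_n n m) W)) = Im (trace_prod n (pauli_n n m) W)"
    using trace_real[OF assms] by simp
  then show ?thesis by simp
qed

lemma sum_swap_m:
  fixes f :: "nat \<Rightarrow> nat \<Rightarrow> nat \<Rightarrow> nat \<Rightarrow> nat \<Rightarrow> complex"
  shows "(\<Sum>m\<in>M. \<Sum>a\<in>A. \<Sum>b\<in>B. \<Sum>c\<in>C. \<Sum>d\<in>D. f m a b c d)
       = (\<Sum>a\<in>A. \<Sum>b\<in>B. \<Sum>c\<in>C. \<Sum>d\<in>D. \<Sum>m\<in>M. f m a b c d)"
  apply (subst sum.swap[where A=M])
  apply (rule sum.cong[OF refl])
  apply (subst sum.swap[where A=M])
  apply (rule sum.cong[OF refl])
  apply (subst sum.swap[where A=M])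
  apply (rule sum.cong[OF refl])
  apply (subst sum.swap[where A=M])
  apply (rule refl)
  done

lemma delta2:
  fixes F :: "nat \<Rightarrow> nat \<Rightarrow> 'a::comm_monoid_add"
  assumes "a \<in> C" "b \<in> D" "finite C" "finite D"
  shows "(\<Sum>c\<in>C. \<Sum>d\<in>D. if c = a then if d = b then F c d else 0 else 0) = F a b"
proof -
  have "(\<Sum>c\<in>C. \<Sum>d\<in>D. if c = a then if d = b then F c d else 0 else 0)
      = (\<Sum>c\<in>C. if c = a then (\<Sum>d\<in>D. if d = b then F c d else 0) else 0)"
    by (intro sum.cong refl) auto
  also have "\<dots> = F a b" using assms by (simp add: sum.delta)
  finally show ?thesis .
qed

lemma IP_lemma:
  assumes "herm A" "herm B"
  shows "(\<Sum>m<4^n. pauli_vec n A m * pauli_vec n B m) = (\<Sum>a<2^n. \<Sum>b<2^n. Re (A a b * cnj (B a b)))"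
proof -
  define T where "T W m = trace_prod n (pauli_n n m) W" for W m
  have pv: "pauli_vec n A m * pauli_vec n B m = Re (T A m * cnj (T B m)) / 2^n" for m
  proof -
    have "pauli_vec n A m * pauli_vec n B m = Re (T A m) * Re (T B m) / (sqrt (2^n))^2"
      by (simp add: pauli_vec_def T_def power2_eq_square)
    also have "\<dots> = Re (T A m * cnj (T B m)) / 2^n"
      using trace_Im[OF assms(2), of n m] by (simp add: T_def)
    finally show ?thesis .
  qed
  have prod: "T A m * cnj (T B m) = (\<Sum>a<2^n. \<Sum>b<2^n. \<Sum>c<2^n. \<Sum>d<2^n.
        (pauli_n n m a b * A b a) * (cnj (pauli_n n m c d) * cnj (B d c)))" for m
    unfolding T_def trace_prod_def cnj_sum complex_cnj_mult
    by (simp only: sum_distrib_right) (simp only: sum_distrib_left)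
  have "(\<Sum>m<4^n. T A m * cnj (T B m)) = (\<Sum>a<2^n. \<Sum>b<2^n. \<Sum>c<2^n. \<Sum>d<2^n.
        (\<Sum>m<4^n. (pauli_n n m a b * A b a) * (cnj (pauli_n n m c d) * cnj (B d c))))"
    unfolding prod by (rule sum_swap_m)
  also have "\<dots> = (\<Sum>a<2^n. \<Sum>b<2^n. \<Sum>c<2^n. \<Sum>d<2^n.
        (if c = a then if d = b then 2^n * (A b a * cnj (B d c)) else 0 else 0))"
  proof (intro sum.cong refl)
    fix a b c d :: nat assume r: "a \<in> {..<2^n}" "b \<in> {..<2^n}" "c \<in> {..<2^n}" "d \<in> {..<2^n}"
    have "(\<Sum>m<4^n. (pauli_n n m a b * A b a) * (cnj (pauli_n n m c d) * cnj (B d c)))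
        = (\<Sum>m<4^n. pauli_n n m a b * cnj (pauli_n n m c d)) * (A b a * cnj (B d c))"
      unfolding sum_distrib_right by (intro sum.cong refl) (simp add: mult_ac)
    then show "(\<Sum>m<4^n. (pauli_n n m a b * A b a) * (cnj (pauli_n n m c d) * cnj (B d c)))
        = (if c = a then if d = b then 2^n * (A b a * cnj (B d c)) else 0 else 0)"
      using r by (auto simp: pauli_complete)
  qed
  also have "\<dots> = (\<Sum>a<2^n. \<Sum>b<2^n. 2^n * (A b a * cnj (B b a)))"
    by (intro sum.cong refl delta2) auto
  also have "\<dots> = 2^n * (\<Sum>a<2^n. \<Sum>b<2^n. A a b * cnj (B a b))"
    by (subst sum.swap) (simp add: sum_distrib_left)
  finally have S: "(\<Sum>m<4^n. T A m * cnj (T B m)) = 2^n * (\<Sum>a<2^n. \<Sum>b<2^n. A a b * cnj (B a b))" .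
  have "(\<Sum>m<4^n. pauli_vec n A m * pauli_vec n B m) = Re (\<Sum>m<4^n. T A m * cnj (T B m)) / 2^n"
    by (simp add: pv sum_divide_distrib Re_sum)
  also have "\<dots> = (\<Sum>a<2^n. \<Sum>b<2^n. Re (A a b * cnj (B a b)))"
    by (simp only: S) (simp add: Re_sum)
  finally show ?thesis .
qed

definition phr :: "nat \<Rightarrow> nat \<Rightarrow> nat \<Rightarrow> nat \<Rightarrow> nat \<Rightarrow> real" where
  "phr p g k x j = (\<Sum>i<2^k. if (x * g ^ i) mod p = j then 1 else 0) / sqrt (2 ^ k)"

lemma phi_real: "phi p g k x j = complex_of_real (phr p g k x j)"
proof -
  have "complex_of_real (\<Sum>i<2^k. if (x * g ^ i) mod p = j then 1 else 0)
      = (\<Sum>i<2^k. if (x * g ^ i) mod p = j then 1 else 0)"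
    unfolding of_real_sum by (intro sum.cong refl) simp
  then show ?thesis by (simp add: phi_def phr_def)
qed

lemma rho_real: "rho p g k x a b = complex_of_real (phr p g k x a * phr p g k x b)"
  by (simp add: rho_def phi_real)

lemma herm_rho: "herm (rho p g k x)"
  by (simp add: herm_def rho_real)

lemma swap4:
  fixes f :: "'c \<Rightarrow> 'd \<Rightarrow> 'e \<Rightarrow> 'f \<Rightarrow> 'a::comm_monoid_add"
  shows "(\<Sum>a\<in>A. \<Sum>b\<in>B. \<Sum>i\<in>I. \<Sum>j\<in>J. f a b i j) = (\<Sum>i\<in>I. \<Sum>j\<in>J. \<Sum>a\<in>A. \<Sum>b\<in>B. f a b i j)"
proof -
  have "(\<Sum>a\<in>A. \<Sum>b\<in>B. \<Sum>i\<in>I. \<Sum>j\<in>J. f a b i j) = (\<Sum>a\<in>A. \<Sum>i\<in>I. \<Sum>b\<in>B. \<Sum>j\<in>J. f a b i j)"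
    by (rule sum.cong[OF refl], rule sum.swap)
  also have "\<dots> = (\<Sum>a\<in>A. \<Sum>i\<in>I. \<Sum>j\<in>J. \<Sum>b\<in>B. f a b i j)"
    by (rule sum.cong[OF refl], rule sum.cong[OF refl], rule sum.swap)
  also have "\<dots> = (\<Sum>i\<in>I. \<Sum>a\<in>A. \<Sum>j\<in>J. \<Sum>b\<in>B. f a b i j)"
    by (rule sum.swap)
  also have "\<dots> = (\<Sum>i\<in>I. \<Sum>j\<in>J. \<Sum>a\<in>A. \<Sum>b\<in>B. f a b i j)"
    by (rule sum.cong[OF refl], rule sum.swap)
  finally show ?thesis .
qed

lemma delta2':
  fixes F :: "nat \<Rightarrow> nat \<Rightarrow> 'a::comm_monoid_add"
  assumes "a \<in> C" "b \<in> D" "finite C" "finite D"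
  shows "(\<Sum>c\<in>C. \<Sum>d\<in>D. if a = c then if b = d then F c d else 0 else 0) = F a b"
proof -
  have "(\<Sum>c\<in>C. \<Sum>d\<in>D. if a = c then if b = d then F c d else 0 else 0)
      = (\<Sum>c\<in>C. if a = c then (\<Sum>d\<in>D. if b = d then F c d else 0) else 0)"
    by (intro sum.cong refl) auto
  also have "\<dots> = F a b" using assms by (simp add: sum.delta')
  finally show ?thesis .
qed

lemma ind_prod_sum:
  fixes h :: "nat \<Rightarrow> nat \<Rightarrow> real"
  assumes "\<forall>i\<in>I. u i < N0" "\<forall>j\<in>J. v j < N0" "finite I" "finite J"
  shows "(\<Sum>a<N0. \<Sum>b<N0. h a b * ((\<Sum>i\<in>I. if u i = a then 1 else 0) * (\<Sum>j\<in>J. if v j = b then 1 else 0)))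
       = (\<Sum>i\<in>I. \<Sum>j\<in>J. h (u i) (v j))"
proof -
  have "(\<Sum>a<N0. \<Sum>b<N0. h a b * ((\<Sum>i\<in>I. if u i = a then 1 else 0) * (\<Sum>j\<in>J. if v j = b then 1 else 0)))
      = (\<Sum>a<N0. \<Sum>b<N0. \<Sum>i\<in>I. \<Sum>j\<in>J. if u i = a then if v j = b then h a b else 0 else 0)"
  proof (intro sum.cong refl)
    fix a b
    show "h a b * ((\<Sum>i\<in>I. if u i = a then 1 else 0) * (\<Sum>j\<in>J. if v j = b then 1 else 0))
        = (\<Sum>i\<in>I. \<Sum>j\<in>J. if u i = a then if v j = b then h a b else 0 else 0)"
      apply (subst sum_product, subst sum_distrib_left, rule sum.cong[OF refl])
      apply (subst sum_distrib_left, rule sum.cong[OF refl])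
      apply simp
      done
  qed
  also have "\<dots> = (\<Sum>i\<in>I. \<Sum>j\<in>J. \<Sum>a<N0. \<Sum>b<N0. if u i = a then if v j = b then h a b else 0 else 0)"
    by (rule swap4)
  also have "\<dots> = (\<Sum>i\<in>I. \<Sum>j\<in>J. h (u i) (v j))"
    using assms by (intro sum.cong refl delta2') auto
  finally show ?thesis .
qed

lemma phr_bilin:
  assumes "0 < p" "p \<le> 2 ^ n"
  shows "(\<Sum>a<2^n. \<Sum>b<2^n. h a b * (phr p g k x a * phr p g k x' b))
       = (\<Sum>i<2^k. \<Sum>j<2^k. h ((x * g ^ i) mod p) ((x' * g ^ j) mod p)) / 2 ^ k"
proof -
  have sq: "sqrt (2 ^ k) * sqrt (2 ^ k) = (2::real) ^ k" by simp
  have "(\<Sum>a<2^n. \<Sum>b<2^n. h a b * (phr p g k x a * phr p g k x' b))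
      = (\<Sum>a<2^n. \<Sum>b<2^n. h a b * ((\<Sum>i<2^k. if (x * g ^ i) mod p = a then 1 else 0) *
            (\<Sum>j<2^k. if (x' * g ^ j) mod p = b then 1 else 0))) / 2 ^ k"
  proof -
    have e: "phr p g k x a * phr p g k x' b = ((\<Sum>i<2^k. if (x * g ^ i) mod p = a then 1 else 0) *
            (\<Sum>j<2^k. if (x' * g ^ j) mod p = b then 1 else 0)) / 2 ^ k" for a b
      by (simp only: phr_def times_divide_times_eq sq)
    show ?thesis by (simp only: e times_divide_eq_right sum_divide_distrib)
  qed
  also have "\<dots> = (\<Sum>i<2^k. \<Sum>j<2^k. h ((x * g ^ i) mod p) ((x' * g ^ j) mod p)) / 2 ^ k"
  proof -
    have "\<forall>i\<in>{..<2^k}. (x * g ^ i) mod p < 2^n" "\<forall>i\<in>{..<2^k}. (x' * g ^ i) mod p < 2^n"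
      using assms by (auto intro: order_less_le_trans[OF mod_less_divisor])
    then show ?thesis by (subst ind_prod_sum) auto
  qed
  finally show ?thesis .
qed

lemma braket_real: "braket n p g k x x' = complex_of_real (\<Sum>j<2^n. phr p g k x j * phr p g k x' j)"
  by (simp add: braket_def phi_real of_real_sum)

lemma delta_mult:
  fixes G :: "nat \<Rightarrow> real"
  assumes "a \<in> S" "finite S"
  shows "(\<Sum>b\<in>S. (if a = b then 1 else 0) * G b) = G a"
proof -
  have "(\<Sum>b\<in>S. (if a = b then 1 else 0) * G b) = (\<Sum>b\<in>S. if a = b then G b else 0)"
    by (intro sum.cong) auto
  also have "\<dots> = G a" using assms by (simp add: sum.delta')
  finally show ?thesis .
qed

lemma phr_inner:
  assumes "0 < p" "p \<le> 2 ^ n"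
  shows "(\<Sum>j<2^n. phr p g k x j * phr p g k x' j)
       = (\<Sum>i<2^k. \<Sum>j<2^k. if (x * g ^ i) mod p = (x' * g ^ j) mod p then 1 else 0) / 2 ^ k"
proof -
  have "(\<Sum>j<2^n. phr p g k x j * phr p g k x' j)
      = (\<Sum>a<2^n. \<Sum>b<2^n. (if a = b then 1 else 0) * (phr p g k x a * phr p g k x' b))"
    by (intro sum.cong refl, subst delta_mult) auto
  also have "\<dots> = (\<Sum>i<2^k. \<Sum>j<2^k. (\<lambda>a b. if a = b then 1 else 0) ((x * g ^ i) mod p) ((x' * g ^ j) mod p)) / 2 ^ k"
    by (rule phr_bilin[OF assms])
  finally show ?thesis by simp
qed

lemma vinner_xt:
  "vinner (4 ^ n + 1) (xtilde n p g k x) (xtilde n p g k x')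
     = ((\<Sum>m<4^n. pauli_vec n (rho p g k x) m * pauli_vec n (rho p g k x') m) + 1) / 2"
proof -
  have s2: "sqrt 2 * sqrt 2 = (2::real)" by simp
  have "vinner (4 ^ n + 1) (xtilde n p g k x) (xtilde n p g k x')
     = (\<Sum>m<4^n. xtilde n p g k x m * xtilde n p g k x' m) + 1 / 2"
    by (simp add: vinner_def xtilde_def)
  also have "(\<Sum>m<4^n. xtilde n p g k x m * xtilde n p g k x' m)
      = (\<Sum>m<4^n. pauli_vec n (rho p g k x) m * pauli_vec n (rho p g k x') m) / 2"
  proof -
    have e: "xtilde n p g k x m * xtilde n p g k x' m
        = pauli_vec n (rho p g k x) m * pauli_vec n (rho p g k x') m / 2" if "m \<in> {..<4^n}" for m
      using that by (simp add: xtilde_def)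
    show ?thesis by (simp only: sum.cong[OF refl e] sum_divide_distrib)
  qed
  finally show ?thesis by simp
qed

lemma IP_rho:
  "(\<Sum>m<4^n. pauli_vec n (rho p g k x) m * pauli_vec n (rho p g k x') m)
     = (\<Sum>j<2^n. phr p g k x j * phr p g k x' j)^2"
proof -
  have "(\<Sum>m<4^n. pauli_vec n (rho p g k x) m * pauli_vec n (rho p g k x') m)
      = (\<Sum>a<2^n. \<Sum>b<2^n. (phr p g k x a * phr p g k x' a) * (phr p g k x b * phr p g k x' b))"
    by (simp add: IP_lemma herm_rho rho_real mult_ac)
  also have "\<dots> = (\<Sum>j<2^n. phr p g k x j * phr p g k x' j)^2"
    by (simp add: power2_eq_square sum_product)
  finally show ?thesis .
qed

lemma part4:
  "vinner (4 ^ n + 1) (xtilde n p g k x) (xtilde n p g k x') = (1 + (cmod (braket n p g k x x'))\<^sup>2) / 2"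
  unfolding vinner_xt IP_rho braket_real norm_of_real by (simp add: power2_abs)

definition closeR :: "nat \<Rightarrow> nat \<Rightarrow> nat \<Rightarrow> nat \<Rightarrow> nat \<Rightarrow> bool" where
  "closeR p g k a b \<longleftrightarrow> (\<exists>d<2^k. (dlog p g a + d) mod (p - 1) = dlog p g b \<or> (dlog p g b + d) mod (p - 1) = dlog p g a)"

definition mr0 :: "nat \<Rightarrow> nat \<Rightarrow> nat \<Rightarrow> nat \<Rightarrow> nat \<Rightarrow> nat \<Rightarrow> real" where
  "mr0 p g s k a b = (if a \<in> {1..p-1} \<and> b \<in> {1..p-1} \<and> closeR p g k a b \<and> f_s p g s a = f_s p g s b
      then sqrt 2 / 2 ^ k * f_s p g s a else 0)"

definition mr :: "nat \<Rightarrow> nat \<Rightarrow> nat \<Rightarrow> nat \<Rightarrow> real \<Rightarrow> nat \<Rightarrow> nat \<Rightarrow> real" where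
  "mr p g s k t a b = (if a = 0 \<and> b = 0 then t else 0) + mr0 p g s k a b"

definition Mc :: "nat \<Rightarrow> nat \<Rightarrow> nat \<Rightarrow> nat \<Rightarrow> real \<Rightarrow> nat \<Rightarrow> nat \<Rightarrow> complex" where
  "Mc p g s k t a b = complex_of_real (mr p g s k t a b)"

definition wv :: "nat \<Rightarrow> nat \<Rightarrow> nat \<Rightarrow> nat \<Rightarrow> nat \<Rightarrow> real \<Rightarrow> nat \<Rightarrow> real" where
  "wv n p g s k t i = (if i < 4 ^ n then pauli_vec n (Mc p g s k t) i else 0)"

lemma sum_if_const: "finite A \<Longrightarrow> (\<Sum>b\<in>A. if P b then (c::real) else 0) = real (card {b\<in>A. P b}) * c"
  by (simp add: sum.inter_filter[symmetric])

lemma fs_pm: "f_s p g s x = 1 \<or> f_s p g s x = -1"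
  by (simp add: f_s_def)

lemma fs_sq: "f_s p g s x * f_s p g s x = 1"
  using fs_pm[of p g s x] by auto

lemma closeR_sym: "closeR p g k a b = closeR p g k b a"
  unfolding closeR_def by blast

lemma mr0_sym: "mr0 p g s k a b = mr0 p g s k b a"
  unfolding mr0_def using closeR_sym[of p g k a b] by auto

lemma herm_Mc: "herm (Mc p g s k t)"
  unfolding herm_def Mc_def mr_def using mr0_sym by auto

lemma mr0_zero: "mr0 p g s k 0 b = 0"
  by (simp add: mr0_def)

lemma mr0_abs: "\<bar>mr0 p g s k a b\<bar> \<le> sqrt 2 / 2 ^ k"
proof -
  have "\<bar>f_s p g s a\<bar> = 1" "\<bar>f_s p g s b\<bar> = 1" using fs_pm[of p g s a] fs_pm[of p g s b] by auto
  then show ?thesis by (simp add: mr0_def abs_mult)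
qed

lemma wv_norm: "vnorm (4 ^ n + 1) (wv n p g s k t) = sqrt (\<Sum>a<2^n. \<Sum>b<2^n. (mr p g s k t a b)\<^sup>2)"
proof -
  have "(\<Sum>i<4 ^ n + 1. (wv n p g s k t i)\<^sup>2) = (\<Sum>i<4 ^ n. (wv n p g s k t i)\<^sup>2)"
    by (simp add: wv_def)
  also have "\<dots> = (\<Sum>m<4 ^ n. pauli_vec n (Mc p g s k t) m * pauli_vec n (Mc p g s k t) m)"
    by (intro sum.cong refl) (simp add: wv_def power2_eq_square)
  also have "\<dots> = (\<Sum>a<2^n. \<Sum>b<2^n. (mr p g s k t a b)\<^sup>2)"
    by (simp add: IP_lemma herm_Mc Mc_def power2_eq_square)
  finally show ?thesis by (simp add: vnorm_def)
qed

lemma mr_sq: "(\<Sum>a<2^n. \<Sum>b<2^n. (mr p g s k t a b)\<^sup>2) = t\<^sup>2 + (\<Sum>a<(2::nat)^n. \<Sum>b<(2::nat)^n. (mr0 p g s k a b)\<^sup>2)"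
proof -
  have e: "(mr p g s k t a b)\<^sup>2 = (if 0 = a then if 0 = b then t\<^sup>2 else 0 else 0) + (mr0 p g s k a b)\<^sup>2" for a b
    by (cases "a = 0 \<and> b = 0") (auto simp: mr_def mr0_zero)
  have "(\<Sum>a<2^n. \<Sum>b<2^n. (mr p g s k t a b)\<^sup>2)
      = (\<Sum>a<(2::nat)^n. \<Sum>b<(2::nat)^n. (if 0 = a then if 0 = b then t\<^sup>2 else 0 else 0))
        + (\<Sum>a<(2::nat)^n. \<Sum>b<(2::nat)^n. (mr0 p g s k a b)\<^sup>2)"
    by (simp only: e sum.distrib)
  also have "(\<Sum>a<(2::nat)^n. \<Sum>b<(2::nat)^n. (if 0 = a then if 0 = b then t\<^sup>2 else 0 else 0)) = t\<^sup>2"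
    by (rule delta2'[where F="\<lambda>c d. t\<^sup>2"]) auto
  finally show ?thesis .
qed

locale lsetup = fixes p g :: nat
  assumes prime_p: "prime p" and primroot: "residue_primroot p g"
begin

lemma p_gt1: "p > 1" using prime_p prime_gt_1_nat by blast

lemma cop: "coprime p g" using primroot by (simp add: residue_primroot_def)

lemma ord_g: "ord p g = p - 1"
  using primroot prime_p by (simp add: residue_primroot_def totient_prime)

lemma gen: "bij_betw (\<lambda>i. g ^ i mod p) {..<p - 1} {0<..<p}"
  using residue_primroot_is_generator[OF p_gt1 primroot] prime_p
  by (simp add: totatives_prime totient_prime)

lemma pow_mod_eq: "i < p - 1 \<Longrightarrow> j < p - 1 \<Longrightarrow> g ^ i mod p = g ^ j mod p \<Longrightarrow> i = j"
  using bij_betw_imp_inj_on[OF gen] by (auto dest: inj_onD)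

lemma dlog_unique:
  assumes "0 < x" "x < p" "e < p - 1" "g ^ e mod p = x"
  shows "dlog p g x = e"
  unfolding dlog_def
proof (rule the_equality)
  show "e < p - 1 \<and> [g ^ e = x] (mod p)" using assms by (simp add: cong_def)
next
  fix e' assume "e' < p - 1 \<and> [g ^ e' = x] (mod p)"
  then show "e' = e" using assms pow_mod_eq[of e' e] by (simp add: cong_def)
qed

lemma dlog:
  assumes "0 < x" "x < p"
  shows "dlog p g x < p - 1" "g ^ dlog p g x mod p = x"
proof -
  have "x \<in> (\<lambda>i. g ^ i mod p) ` {..<p - 1}"
    using bij_betw_imp_surj_on[OF gen] assms by auto
  then obtain e where e: "e < p - 1" "g ^ e mod p = x" by auto
  then have "dlog p g x = e" using dlog_unique assms by blast
  then show "dlog p g x < p - 1" "g ^ dlog p g x mod p = x" using e by auto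
qed

lemma dlog_inj: "inj_on (dlog p g) {1..p-1}"
proof (rule inj_onI)
  fix x y assume "x \<in> {1..p-1}" "y \<in> {1..p-1}" "dlog p g x = dlog p g y"
  note h = this
  have hx: "0 < x" "x < p" "0 < y" "y < p" using h p_gt1 by auto
  have "x = g ^ dlog p g x mod p" using dlog(2)[OF hx(1,2)] by simp
  also have "\<dots> = g ^ dlog p g y mod p" using h(3) by simp
  also have "\<dots> = y" using dlog(2)[OF hx(3,4)] by simp
  finally show "x = y" .
qed

lemma win_range:
  assumes "x \<in> {1..p-1}"
  shows "(x * g ^ i) mod p \<in> {1..p-1}"
proof -
  have x: "0 < x" "x < p" using assms p_gt1 by auto
  have "\<not> p dvd x" using x dvd_imp_le[of p x] by auto
  moreover have "\<not> p dvd g ^ i"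
    using cop prime_p coprime_absorb_left[of p "g^i"] not_prime_unit by auto
  ultimately have "\<not> p dvd x * g ^ i" using prime_p by (simp add: prime_dvd_mult_iff)
  then have "(x * g ^ i) mod p \<noteq> 0" by (simp add: dvd_eq_mod_eq_0)
  moreover have "(x * g ^ i) mod p < p" using p_gt1 by simp
  ultimately show ?thesis by auto
qed

lemma dlog_win:
  assumes "x \<in> {1..p-1}"
  shows "dlog p g ((x * g ^ i) mod p) = (dlog p g x + i) mod (p - 1)"
proof -
  let ?l = "dlog p g x"
  have x: "0 < x" "x < p" using assms p_gt1 by auto
  have "[g ^ ((?l + i) mod (p - 1)) = g ^ (?l + i)] (mod p)"
    using order_divides_expdiff[OF cop] ord_g by (simp add: cong_def)
  then have "g ^ ((?l + i) mod (p - 1)) mod p = g ^ (?l + i) mod p" by (simp add: cong_def)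
  also have "\<dots> = ((g ^ ?l mod p) * g ^ i) mod p" by (simp add: power_add mod_mult_left_eq)
  also have "\<dots> = (x * g ^ i) mod p" using dlog(2)[OF x] by simp
  finally show ?thesis
    using win_range[OF assms, of i] p_gt1 by (intro dlog_unique) auto
qed

lemma win_inj:
  assumes "x \<in> {1..p-1}" "i < p - 1" "j < p - 1" "(x * g ^ i) mod p = (x * g ^ j) mod p"
  shows "i = j"
proof -
  have "(dlog p g x + i) mod (p - 1) = (dlog p g x + j) mod (p - 1)"
    using dlog_win[OF assms(1), of i] dlog_win[OF assms(1), of j] assms(4) by simp
  then have "[i = j] (mod (p - 1))" by (simp add: cong_def[symmetric] cong_add_lcancel_nat)
  then show ?thesis using assms by (simp add: cong_def)
qed


lemma p_ge3: "odd p \<Longrightarrow> p \<ge> 3"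
  using p_gt1 by (cases "p = 2") auto

lemma norm1:
  assumes "x \<in> {1..p-1}" "2 ^ k < p - 1" "p \<le> 2 ^ n"
  shows "(\<Sum>j<2^n. phr p g k x j * phr p g k x j) = 1"
proof -
  have inner: "(\<Sum>j<2^k. if (x*g^i) mod p = (x*g^j) mod p then 1 else 0) = (1::real)" if "i < 2^k" for i
  proof -
    have "(\<Sum>j<2^k. if (x*g^i) mod p = (x*g^j) mod p then 1 else (0::real)) = (\<Sum>j<2^k. if i = j then 1 else 0)"
    proof (intro sum.cong refl)
      fix j assume "j \<in> {..<(2::nat)^k}"
      then have "j < p - 1" "i < p - 1" using that assms(2) by auto
      then show "(if (x*g^i) mod p = (x*g^j) mod p then 1 else (0::real)) = (if i = j then 1 else 0)"
        using win_inj[OF assms(1), of i j] by auto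
    qed
    also have "\<dots> = 1" using that by simp
    finally show ?thesis .
  qed
  have "(\<Sum>j<2^n. phr p g k x j * phr p g k x j)
      = (\<Sum>i<2^k. \<Sum>j<2^k. if (x * g ^ i) mod p = (x * g ^ j) mod p then 1 else 0) / 2 ^ k"
    using p_gt1 assms(3) by (intro phr_inner) auto
  also have "\<dots> = (\<Sum>i<(2::nat)^k. (1::real)) / 2 ^ k"
    using inner by simp
  also have "\<dots> = 1" by simp
  finally show ?thesis .
qed

lemma part1:
  assumes "x \<in> {1..p-1}" "2 ^ k < p - 1" "p \<le> 2 ^ n"
  shows "vnorm (4 ^ n + 1) (xtilde n p g k x) = 1"
proof -
  have "(\<Sum>i<4 ^ n + 1. (xtilde n p g k x i)\<^sup>2) = vinner (4 ^ n + 1) (xtilde n p g k x) (xtilde n p g k x)"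
    by (simp add: vinner_def power2_eq_square)
  also have "\<dots> = 1"
    unfolding part4 braket_real norm1[OF assms] by simp
  finally show ?thesis by (simp add: vnorm_def)
qed

lemma fs_char:
  assumes "odd p" "x \<in> {1..p-1}"
  shows "f_s p g s x = (if (int (dlog p g x) - int s) mod int (p - 1) < int ((p - 1) div 2) then 1 else -1)"
proof -
  define t where "t = dlog p g x"
  define N where "N = p - 1"
  have tN: "t < N" using dlog(1)[of x] assms p_gt1 by (auto simp: t_def N_def)
  have p3: "p \<ge> 3" using p_ge3 assms by auto
  have h: "(p - 3) div 2 + 1 = (p - 1) div 2" using p3 assms(1) by presburger
  have Npos: "N > 0" using p3 by (simp add: N_def)
  have "(\<exists>i \<le> (p - 3) div 2. (s + i) mod N = t) \<longleftrightarrow> (int t - int s) mod int N < int ((p - 1) div 2)"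
  proof
    assume "\<exists>i \<le> (p - 3) div 2. (s + i) mod N = t"
    then obtain i where i: "i \<le> (p - 3) div 2" "(s + i) mod N = t" by blast
    have iN: "i < N" using i(1) p3 by (simp add: N_def)
    have "int t = (int s + int i) mod int N" using i(2) by (metis of_nat_add zmod_int)
    then have "(int t - int s) mod int N = ((int s + int i) mod int N - int s) mod int N" by simp
    also have "\<dots> = int i mod int N" by (simp add: mod_diff_left_eq)
    also have "\<dots> = int i" using iN by simp
    finally show "(int t - int s) mod int N < int ((p - 1) div 2)" using i(1) h by linarith
  next
    assume a: "(int t - int s) mod int N < int ((p - 1) div 2)"
    define r where "r = (int t - int s) mod int N"
    have r0: "0 \<le> r" using Npos by (simp add: r_def)
    define i where "i = nat r"
    have "i \<le> (p - 3) div 2" using a h r0 by (simp add: i_def r_def)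
    moreover have "(s + i) mod N = t"
    proof -
      have "int ((s + i) mod N) = (int s + r) mod int N" using r0 by (simp add: i_def zmod_int)
      also have "\<dots> = (int s + (int t - int s)) mod int N" by (simp add: r_def mod_add_right_eq)
      also have "\<dots> = int t" using tN by simp
      finally show ?thesis by simp
    qed
    ultimately show "\<exists>i \<le> (p - 3) div 2. (s + i) mod N = t" by blast
  qed
  then show ?thesis by (simp add: f_s_def t_def N_def)
qed

lemma posr_win:
  assumes "x \<in> {1..p-1}"
  shows "(int (dlog p g ((x * g ^ i) mod p)) - int s) mod int (p - 1)
       = ((int (dlog p g x) - int s) mod int (p - 1) + int i) mod int (p - 1)"
proof -
  have "(int (dlog p g ((x * g ^ i) mod p)) - int s) mod int (p - 1)
      = (int ((dlog p g x + i) mod (p - 1)) - int s) mod int (p - 1)"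
    by (simp add: dlog_win[OF assms])
  also have "\<dots> = ((int (dlog p g x) + int i) mod int (p - 1) - int s) mod int (p - 1)"
    by (simp add: zmod_int)
  also have "\<dots> = (int (dlog p g x) + int i - int s) mod int (p - 1)"
    by (simp add: mod_diff_left_eq)
  also have "\<dots> = (int i + (int (dlog p g x) - int s)) mod int (p - 1)"
    by (simp add: algebra_simps)
  also have "\<dots> = (int i + (int (dlog p g x) - int s) mod int (p - 1)) mod int (p - 1)"
    by (simp only: mod_add_right_eq)
  also have "\<dots> = ((int (dlog p g x) - int s) mod int (p - 1) + int i) mod int (p - 1)"
    by (simp only: add.commute)
  finally show ?thesis .
qed

lemma posr_inj: "inj_on (\<lambda>x. (int (dlog p g x) - int s) mod int (p - 1)) {1..p-1}"
proof (rule inj_onI)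
  fix x y assume xy: "x \<in> {1..p-1}" "y \<in> {1..p-1}"
    "(int (dlog p g x) - int s) mod int (p - 1) = (int (dlog p g y) - int s) mod int (p - 1)"
  then have "int (p - 1) dvd (int (dlog p g x) - int s) - (int (dlog p g y) - int s)"
    by (simp add: mod_eq_dvd_iff)
  then have "int (dlog p g x) mod int (p - 1) = int (dlog p g y) mod int (p - 1)"
    by (simp add: mod_eq_dvd_iff)
  moreover have "dlog p g x < p - 1" "dlog p g y < p - 1" using dlog(1) xy p_gt1 by auto
  ultimately have "dlog p g x = dlog p g y" by simp
  then show "x = y" using dlog_inj xy by (auto dest: inj_onD)
qed


lemma wv_inner:
  assumes "x \<in> {1..p-1}" "p \<le> 2 ^ n"
  shows "vinner (4 ^ n + 1) (wv n p g s k t) (xtilde n p g k x)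
       = (\<Sum>i<2^k. \<Sum>j<2^k. mr0 p g s k ((x * g ^ i) mod p) ((x * g ^ j) mod p)) / 2 ^ k / sqrt 2"
proof -
  have "vinner (4 ^ n + 1) (wv n p g s k t) (xtilde n p g k x)
      = (\<Sum>m<4 ^ n. wv n p g s k t m * xtilde n p g k x m)"
    by (simp add: vinner_def wv_def)
  also have "\<dots> = (\<Sum>m<4 ^ n. pauli_vec n (Mc p g s k t) m * pauli_vec n (rho p g k x) m) / sqrt 2"
    unfolding sum_divide_distrib by (intro sum.cong refl) (simp add: wv_def xtilde_def)
  also have "(\<Sum>m<4 ^ n. pauli_vec n (Mc p g s k t) m * pauli_vec n (rho p g k x) m)
      = (\<Sum>a<2^n. \<Sum>b<2^n. mr p g s k t a b * (phr p g k x a * phr p g k x b))"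
    by (simp add: IP_lemma herm_Mc herm_rho Mc_def rho_real)
  also have "\<dots> = (\<Sum>i<2^k. \<Sum>j<2^k. mr p g s k t ((x * g ^ i) mod p) ((x * g ^ j) mod p)) / 2 ^ k"
    using p_gt1 assms(2) by (intro phr_bilin) auto
  also have "(\<Sum>i<2^k. \<Sum>j<2^k. mr p g s k t ((x * g ^ i) mod p) ((x * g ^ j) mod p))
      = (\<Sum>i<2^k. \<Sum>j<2^k. mr0 p g s k ((x * g ^ i) mod p) ((x * g ^ j) mod p))"
  proof (intro sum.cong refl)
    fix i j
    have "(x * g ^ i) mod p \<noteq> 0" using win_range[OF assms(1), of i] by auto
    then show "mr p g s k t ((x * g ^ i) mod p) ((x * g ^ j) mod p) = mr0 p g s k ((x * g ^ i) mod p) ((x * g ^ j) mod p)"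
      by (simp add: mr_def)
  qed
  finally show ?thesis .
qed

lemma closeR_win:
  assumes "x \<in> {1..p-1}" "i < 2 ^ k" "j < 2 ^ k"
  shows "closeR p g k ((x * g ^ i) mod p) ((x * g ^ j) mod p)"
proof -
  let ?l = "dlog p g x"
  have di: "dlog p g ((x * g ^ i) mod p) = (?l + i) mod (p - 1)" and dj: "dlog p g ((x * g ^ j) mod p) = (?l + j) mod (p - 1)"
    using dlog_win[OF assms(1)] by auto
  show ?thesis
  proof (cases "i \<le> j")
    case True
    have "((?l + i) mod (p - 1) + (j - i)) mod (p - 1) = (?l + i + (j - i)) mod (p - 1)"
      by (rule mod_add_left_eq)
    also have "?l + i + (j - i) = ?l + j" using True by simp
    finally have "((?l + i) mod (p - 1) + (j - i)) mod (p - 1) = (?l + j) mod (p - 1)" .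
    then show ?thesis unfolding closeR_def di dj using assms(3) True
      by (intro exI[of _ "j - i"]) auto
  next
    case False
    have "((?l + j) mod (p - 1) + (i - j)) mod (p - 1) = (?l + j + (i - j)) mod (p - 1)"
      by (rule mod_add_left_eq)
    also have "?l + j + (i - j) = ?l + i" using False by simp
    finally have "((?l + j) mod (p - 1) + (i - j)) mod (p - 1) = (?l + i) mod (p - 1)" .
    then show ?thesis unfolding closeR_def di dj using assms(2) False
      by (intro exI[of _ "i - j"]) auto
  qed
qed

lemma good_val:
  assumes "x \<in> {1..p-1}" "p \<le> 2 ^ n"
    and good: "\<forall>i<2^k. f_s p g s ((x * g ^ i) mod p) = f_s p g s x"
  shows "vinner (4 ^ n + 1) (wv n p g s k t) (xtilde n p g k x) = f_s p g s x"
proof -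
  have e: "mr0 p g s k ((x * g ^ i) mod p) ((x * g ^ j) mod p) = sqrt 2 / 2 ^ k * f_s p g s x"
    if "i < 2^k" "j < 2^k" for i j
    using that good win_range[OF assms(1)] closeR_win[OF assms(1) that] by (simp add: mr0_def)
  have "vinner (4 ^ n + 1) (wv n p g s k t) (xtilde n p g k x)
      = (\<Sum>i<(2::nat)^k. \<Sum>j<(2::nat)^k. sqrt 2 / 2 ^ k * f_s p g s x) / 2 ^ k / sqrt 2"
    unfolding wv_inner[OF assms(1,2)] by (simp add: e)
  also have "\<dots> = f_s p g s x" by simp
  finally show ?thesis .
qed

lemma val_bound:
  assumes "x \<in> {1..p-1}" "p \<le> 2 ^ n"
  shows "\<bar>vinner (4 ^ n + 1) (wv n p g s k t) (xtilde n p g k x)\<bar> \<le> 1"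
proof -
  have "\<bar>\<Sum>i<(2::nat)^k. \<Sum>j<(2::nat)^k. mr0 p g s k ((x * g ^ i) mod p) ((x * g ^ j) mod p)\<bar>
      \<le> (\<Sum>i<(2::nat)^k. \<Sum>j<(2::nat)^k. sqrt 2 / 2 ^ k)"
    by (rule order_trans[OF sum_abs], rule sum_mono, rule order_trans[OF sum_abs], rule sum_mono, rule mr0_abs)
  also have "\<dots> = 2 ^ k * sqrt 2" by (simp add: power2_eq_square)
  finally have b: "\<bar>\<Sum>i<(2::nat)^k. \<Sum>j<(2::nat)^k. mr0 p g s k ((x * g ^ i) mod p) ((x * g ^ j) mod p)\<bar> \<le> 2 ^ k * sqrt 2" .
  show ?thesis unfolding wv_inner[OF assms] using b
    by (simp add: abs_div divide_le_eq field_simps)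
qed

lemma card_close:
  assumes "a \<in> {1..p-1}"
  shows "card {b \<in> {1..p-1}. closeR p g k a b} \<le> 2 * 2 ^ k"
proof -
  define A1 where "A1 d = {b \<in> {1..p-1}. (dlog p g a + d) mod (p - 1) = dlog p g b}" for d
  define A2 where "A2 d = {b \<in> {1..p-1}. (dlog p g b + d) mod (p - 1) = dlog p g a}" for d
  have sub: "{b \<in> {1..p-1}. closeR p g k a b} \<subseteq> (\<Union>d<2^k. A1 d) \<union> (\<Union>d<2^k. A2 d)"
    by (auto simp: closeR_def A1_def A2_def)
  have c1: "card (A1 d) \<le> 1" for d
  proof -
    have "finite (A1 d)" by (simp add: A1_def)
    moreover have "\<forall>b1\<in>A1 d. \<forall>b2\<in>A1 d. b1 = b2"
      using dlog_inj by (auto simp: A1_def dest: inj_onD)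
    ultimately show ?thesis using card_le_Suc0_iff_eq by auto
  qed
  have c2: "card (A2 d) \<le> 1" for d
  proof -
    have "finite (A2 d)" by (simp add: A2_def)
    moreover have "\<forall>b1\<in>A2 d. \<forall>b2\<in>A2 d. b1 = b2"
    proof (intro ballI)
      fix b1 b2 assume b: "b1 \<in> A2 d" "b2 \<in> A2 d"
      then have "[dlog p g b1 + d = dlog p g b2 + d] (mod (p - 1))" by (simp add: A2_def cong_def)
      then have "[dlog p g b1 = dlog p g b2] (mod (p - 1))" by (simp add: cong_add_rcancel_nat)
      moreover have "dlog p g b1 < p - 1" "dlog p g b2 < p - 1" using b dlog(1) p_gt1 by (auto simp: A2_def)
      ultimately have "dlog p g b1 = dlog p g b2" by (simp add: cong_def)
      then show "b1 = b2" using b dlog_inj by (auto simp: A2_def dest: inj_onD)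
    qed
    ultimately show ?thesis using card_le_Suc0_iff_eq by auto
  qed
  have f1: "finite (\<Union>d<(2::nat)^k. A1 d)" "finite (\<Union>d<(2::nat)^k. A2 d)" by (auto simp: A1_def A2_def)
  have "card {b \<in> {1..p-1}. closeR p g k a b} \<le> card ((\<Union>d<(2::nat)^k. A1 d) \<union> (\<Union>d<(2::nat)^k. A2 d))"
    using sub f1 by (intro card_mono) auto
  also have "\<dots> \<le> card (\<Union>d<(2::nat)^k. A1 d) + card (\<Union>d<(2::nat)^k. A2 d)" by (rule card_Un_le)
  also have "card (\<Union>d<(2::nat)^k. A1 d) \<le> (\<Sum>d<(2::nat)^k. card (A1 d))" by (rule card_UN_le) simp
  also have "\<dots> \<le> (\<Sum>d<(2::nat)^k. 1)" by (rule sum_mono) (rule c1)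
  also have "card (\<Union>d<(2::nat)^k. A2 d) \<le> (\<Sum>d<(2::nat)^k. card (A2 d))" by (rule card_UN_le) simp
  also have "\<dots> \<le> (\<Sum>d<(2::nat)^k. 1)" by (rule sum_mono) (rule c2)
  finally show ?thesis by simp
qed

lemma Q_bound:
  "(\<Sum>a<(2::nat)^n. \<Sum>b<(2::nat)^n. (mr0 p g s k a b)\<^sup>2) \<le> 4 * real (p - 1) / 2 ^ k"
proof -
  define c where "c = (sqrt 2 / 2 ^ k)\<^sup>2"
  have c: "c = 2 / 4 ^ k" unfolding c_def by (simp add: power_divide power2_eq_square power_mult_distrib[symmetric])
  have inner: "(\<Sum>b<(2::nat)^n. (mr0 p g s k a b)\<^sup>2) \<le> (if a \<in> {1..p-1} then c * (2 * 2 ^ k) else 0)" for a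
  proof -
    have "(\<Sum>b<(2::nat)^n. (mr0 p g s k a b)\<^sup>2) \<le> (\<Sum>b<(2::nat)^n. if a \<in> {1..p-1} \<and> b \<in> {b \<in> {1..p-1}. closeR p g k a b} then c else 0)"
    proof (rule sum_mono)
      fix b
      have "(mr0 p g s k a b)\<^sup>2 \<le> c" unfolding c_def
        using mr0_abs[of p g s k a b] by (metis abs_ge_zero power2_abs power_mono)
      then show "(mr0 p g s k a b)\<^sup>2 \<le> (if a \<in> {1..p-1} \<and> b \<in> {b \<in> {1..p-1}. closeR p g k a b} then c else 0)"
        by (auto simp: mr0_def)
    qed
    also have "\<dots> \<le> (if a \<in> {1..p-1} then c * (2 * 2 ^ k) else 0)"
    proof (cases "a \<in> {1..p-1}")
      case True
      define S where "S = {b \<in> {1..p-1}. closeR p g k a b}"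
      have "(\<Sum>b<(2::nat)^n. if a \<in> {1..p-1} \<and> b \<in> {b \<in> {1..p-1}. closeR p g k a b} then c else 0)
          = (\<Sum>b<(2::nat)^n. if b \<in> S then c else 0)"
        unfolding S_def[symmetric] by (intro sum.cong refl) (use True in auto)
      also have "\<dots> = real (card {b\<in>{..<(2::nat)^n}. b \<in> S}) * c" by (rule sum_if_const) simp
      also have "\<dots> \<le> real (2 * 2 ^ k) * c"
      proof -
        have "card {b\<in>{..<(2::nat)^n}. b \<in> S} \<le> card S"
          by (rule card_mono) (auto simp: S_def)
        also have "\<dots> \<le> 2 * 2 ^ k" unfolding S_def by (rule card_close[OF True])
        finally have h: "card {b\<in>{..<(2::nat)^n}. b \<in> S} \<le> 2 * 2 ^ k" .
        have h2: "real (card {b\<in>{..<(2::nat)^n}. b \<in> S}) \<le> real (2 * 2 ^ k)" using h by (simp only: of_nat_le_iff)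
        show ?thesis by (rule mult_right_mono[OF h2]) (simp add: c_def)
      qed
      finally show ?thesis using True by (simp add: mult.commute)
    next
      case False
      have "(\<Sum>b<(2::nat)^n. if a \<in> {1..p-1} \<and> b \<in> {b \<in> {1..p-1}. closeR p g k a b} then c else 0) = 0"
        using False by (intro sum.neutral) auto
      then show ?thesis using False by (simp only: if_False)
    qed
    finally show ?thesis .
  qed
  have "(\<Sum>a<(2::nat)^n. \<Sum>b<(2::nat)^n. (mr0 p g s k a b)\<^sup>2) \<le> (\<Sum>a<(2::nat)^n. if a \<in> {1..p-1} then c * (2 * 2 ^ k) else 0)"
    by (rule sum_mono) (rule inner)
  also have "\<dots> = real (card {a\<in>{..<(2::nat)^n}. a \<in> {1..p-1}}) * (c * (2 * 2 ^ k))"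
    by (rule sum_if_const) simp
  also have "\<dots> \<le> real (p - 1) * (c * (2 * 2 ^ k))"
  proof -
    have "card {a\<in>{..<(2::nat)^n}. a \<in> {1..p-1}} \<le> card {1..p-1}" by (rule card_mono) auto
    then have h: "card {a\<in>{..<(2::nat)^n}. a \<in> {1..p-1}} \<le> p - 1" by simp
    have h2: "real (card {a\<in>{..<(2::nat)^n}. a \<in> {1..p-1}}) \<le> real (p - 1)" using h by (simp only: of_nat_le_iff)
    show ?thesis by (rule mult_right_mono[OF h2]) (simp add: c_def)
  qed
  also have "\<dots> = 4 * real (p - 1) / 2 ^ k"
    unfolding c by (simp add: field_simps power_mult_distrib[symmetric] flip: power_mult_distrib)
  finally show ?thesis .
qed

end

lemma win_arith:
  fixes r N hh K i :: int
  assumes "0 \<le> r" "r < N" "N = 2 * hh" "K \<le> hh" "0 \<le> i" "i < K"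
    "r \<notin> {hh - K + 1..hh - 1}" "r \<notin> {N - K + 1..N - 1}"
  shows "((r + i) mod N < hh) = (r < hh)"
proof -
  have "r + i < N" using assms by auto
  then have "(r + i) mod N = r + i" using assms by simp
  moreover have "(r + i < hh) = (r < hh)" using assms by auto
  ultimately show ?thesis by simp
qed

context lsetup
begin

lemma prob_good:
  assumes "odd p" "2 ^ k \<le> (p - 1) div 2" "p \<le> 2 ^ n"
  shows "real (p - 1) - 2 * 2 ^ k
     \<le> real (card {x \<in> {1..p-1}. 1 \<le> f_s p g s x * vinner (4 ^ n + 1) (wv n p g s k t) (xtilde n p g k x)})"
proof -
  define N :: int where "N = int (p - 1)"
  define hh :: int where "hh = int ((p - 1) div 2)"
  define K :: int where "K = 2 ^ k"
  define posr where "posr x = (int (dlog p g x) - int s) mod int (p - 1)" for x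
  define R where "R = {hh - K + 1..hh - 1} \<union> {N - K + 1..N - 1}"
  define Bad where "Bad = {x \<in> {1..p-1}. posr x \<in> R}"
  define Good where "Good = {x \<in> {1..p-1}. 1 \<le> f_s p g s x * vinner (4 ^ n + 1) (wv n p g s k t) (xtilde n p g k x)}"
  have p3: "p \<ge> 3" using p_ge3 assms(1) by auto
  have Npos: "N > 0" using p3 by (simp add: N_def)
  have N2: "N = 2 * hh" using assms(1) p3 unfolding N_def hh_def by (simp add: of_nat_diff) presburger
  have Kh: "K \<le> hh" using assms(2) unfolding K_def hh_def by (metis of_nat_le_iff of_nat_numeral of_nat_power)
  have kp: "2 ^ k < p - 1" using assms(2) p3 by linarith
  have sub: "{1..p-1} - Bad \<subseteq> Good"
  proof
    fix x assume x: "x \<in> {1..p-1} - Bad"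
    then have x1: "x \<in> {1..p-1}" and nb: "posr x \<notin> R" by (auto simp: Bad_def)
    have good: "\<forall>i<2^k. f_s p g s ((x * g ^ i) mod p) = f_s p g s x"
    proof (intro allI impI)
      fix i :: nat assume i: "i < 2 ^ k"
      have r0: "0 \<le> posr x" "posr x < N" using Npos by (auto simp: posr_def N_def)
      have "((posr x + int i) mod N < hh) = (posr x < hh)"
        using nb r0 N2 Kh i unfolding R_def by (intro win_arith) (auto simp: K_def)
      then have iff: "(((int (dlog p g x) - int s) mod int (p - 1) + int i) mod int (p - 1) < int ((p - 1) div 2))
          = ((int (dlog p g x) - int s) mod int (p - 1) < int ((p - 1) div 2))"
        by (simp only: posr_def N_def hh_def)
      have "f_s p g s ((x * g ^ i) mod p) = (if (int (dlog p g ((x * g ^ i) mod p)) - int s) mod int (p - 1) < int ((p - 1) div 2) then 1 else -1)"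
        by (rule fs_char[where s=s, OF assms(1) win_range[OF x1, of i]])
      also have "\<dots> = (if ((int (dlog p g x) - int s) mod int (p - 1) + int i) mod int (p - 1) < int ((p - 1) div 2) then 1 else -1)"
        by (simp only: posr_win[OF x1])
      also have "\<dots> = (if (int (dlog p g x) - int s) mod int (p - 1) < int ((p - 1) div 2) then 1 else -1)"
        by (simp only: iff)
      also have "\<dots> = f_s p g s x"
        by (rule fs_char[where s=s, OF assms(1) x1, symmetric])
      finally show "f_s p g s ((x * g ^ i) mod p) = f_s p g s x" .
    qed
    have "vinner (4 ^ n + 1) (wv n p g s k t) (xtilde n p g k x) = f_s p g s x"
      by (rule good_val[OF x1 assms(3) good])
    then show "x \<in> Good" using x1 fs_sq[of p g s x] by (simp add: Good_def)
  qed
  have cardR: "card R \<le> 2 * 2 ^ k"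
  proof -
    have "card R \<le> card {hh - K + 1..hh - 1} + card {N - K + 1..N - 1}" unfolding R_def by (rule card_Un_le)
    also have "\<dots> = nat ((2::int) ^ k - 1) + nat ((2::int) ^ k - 1)" by (simp add: K_def)
    also have "\<dots> \<le> 2 * 2 ^ k"
    proof -
      have h: "nat ((2::int) ^ k - 1) \<le> 2 ^ k" by (simp add: nat_le_iff)
      show ?thesis using h by linarith
    qed
    finally show ?thesis .
  qed
  have cardBad: "card Bad \<le> 2 * 2 ^ k"
  proof -
    have "card Bad \<le> card R"
    proof (rule card_inj_on_le)
      show "inj_on posr Bad" unfolding posr_def Bad_def by (rule inj_on_subset[OF posr_inj]) auto
      show "posr ` Bad \<subseteq> R" by (auto simp: Bad_def)
      show "finite R" by (simp add: R_def)
    qed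
    then show ?thesis using cardR by linarith
  qed
  have "card ({1..p-1} - Bad) = (p - 1) - card Bad"
    by (subst card_Diff_subset) (auto simp: Bad_def)
  moreover have "card ({1..p-1} - Bad) \<le> card Good"
    by (rule card_mono[OF _ sub]) (simp add: Good_def)
  ultimately have "(p - 1) - 2 * 2 ^ k \<le> card Good" using cardBad by linarith
  then have A: "real (p - 1 - 2 * 2 ^ k) \<le> real (card Good)" by (simp only: of_nat_le_iff)
  have le2: "2 * 2 ^ k \<le> p - 1" using assms(2) by linarith
  have "real (p - 1 - 2 * 2 ^ k) = real (p - 1) - real (2 * 2 ^ k)" by (rule of_nat_diff[OF le2])
  then have "real (p - 1 - 2 * 2 ^ k) = real (p - 1) - 2 * 2 ^ k" by simp
  then have "real (p - 1) - 2 * 2 ^ k \<le> real (card Good)" using A by linarith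
  then show ?thesis by (simp add: Good_def)
qed

end

lemma vnorm_scale: "c \<ge> 0 \<Longrightarrow> vnorm d (\<lambda>i. c * v i) = c * vnorm d v"
  by (simp add: vnorm_def power_mult_distrib sum_distrib_left[symmetric] real_sqrt_mult)

lemma vinner_scale: "vinner d (\<lambda>i. c * v i) u = c * vinner d v u"
  by (simp add: vinner_def sum_distrib_left mult.assoc)

theorem lemmaD3:
  fixes p g s k n :: nat and \<Delta> :: real
  assumes "prime p" and "odd p"
    and "n = nat \<lceil>log 2 (real p)\<rceil>"
    and "residue_primroot p g"
    and "s \<in> {1..p - 1}"
    and "2 ^ k \<le> (p - 1) div 2"
    and "\<Delta> = 2 ^ (k + 1) / real (p - 1)"
  shows
    "(\<forall>x \<in> {1..p - 1}. vnorm (4 ^ n + 1) (xtilde n p g k x) = 1)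
     \<and> (\<exists>w. vnorm (4 ^ n + 1) w = 1
          \<and> prob_units p (\<lambda>x. f_s p g s x * vinner (4 ^ n + 1) w (xtilde n p g k x)
                               \<ge> \<Delta> / sqrt (8 + 2 * \<Delta>\<^sup>2)) \<ge> 1 - \<Delta>
          \<and> (\<forall>x \<in> {1..p - 1}. \<bar>f_s p g s x * vinner (4 ^ n + 1) w (xtilde n p g k x)\<bar>
                               \<le> \<Delta> / sqrt (8 + 2 * \<Delta>\<^sup>2))
          \<and> (let w' = (\<lambda>i. (sqrt (8 + 2 * \<Delta>\<^sup>2) / \<Delta>) * w i) in
               prob_units p (\<lambda>x. f_s p g s x * vinner (4 ^ n + 1) w' (xtilde n p g k x) \<ge> 1) \<ge> 1 - \<Delta>
             \<and> (\<forall>x \<in> {1..p - 1}. \<bar>f_s p g s x * vinner (4 ^ n + 1) w' (xtilde n p g k x)\<bar> \<le> 1)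
             \<and> vnorm (4 ^ n + 1) w' = sqrt (8 + 2 * \<Delta>\<^sup>2) / \<Delta>
             \<and> vnorm (4 ^ n + 1) w' \<le> sqrt 10 / \<Delta>))
     \<and> (\<forall>x \<in> {1..p - 1}. \<forall>x' \<in> {1..p - 1}.
          vinner (4 ^ n + 1) (xtilde n p g k x) (xtilde n p g k x')
            = (1 + (cmod (braket n p g k x x'))\<^sup>2) / 2)"
proof -
  interpret lsetup p g using assms(1,4) by unfold_locales
  have p3: "p \<ge> 3" using p_ge3 assms(2) by auto
  have pn: "p \<le> 2 ^ n"
  proof -
    have lg: "log 2 (real p) \<le> real (nat \<lceil>log 2 (real p)\<rceil>)" by (rule real_nat_ceiling_ge)
    have "real p = 2 powr log 2 (real p)" using p3 by simp
    also have "\<dots> \<le> 2 powr real (nat \<lceil>log 2 (real p)\<rceil>)" by (rule powr_mono[OF lg]) simp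
    also have "\<dots> = 2 ^ n" by (simp add: powr_realpow assms(3))
    finally have "real p \<le> real (2 ^ n)" by simp
    then show ?thesis by (simp only: of_nat_le_iff)
  qed
  have kp: "2 ^ k < p - 1" using assms(6) p3 by linarith
  have le2: "2 * 2 ^ k \<le> p - 1" using assms(6) by linarith
  define N where "N = real (p - 1)"
  define K :: real where "K = 2 ^ k"
  have Npos: "N > 0" using p3 by (simp add: N_def)
  have Kpos: "K > 0" by (simp add: K_def)
  have le2r: "2 * K \<le> N" unfolding N_def K_def using le2
    by (metis of_nat_le_iff of_nat_mult of_nat_numeral of_nat_power)
  have D: "\<Delta> = 2 * K / N" by (simp add: assms(7) N_def K_def)
  have Dpos: "\<Delta> > 0" using D Npos Kpos by simp
  have D1: "\<Delta> \<le> 1" using D Npos le2r by (simp add: divide_le_eq)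
  define C where "C = sqrt (8 + 2 * \<Delta>\<^sup>2) / \<Delta>"
  have "0 \<le> \<Delta>\<^sup>2" by simp
  then have "0 < 8 + 2 * \<Delta>\<^sup>2" by linarith
  then have s8: "sqrt (8 + 2 * \<Delta>\<^sup>2) > 0" by simp
  have Cpos: "C > 0" using Dpos s8 unfolding C_def by (rule divide_pos_pos[rotated])
  define Q where "Q = (\<Sum>a<(2::nat)^n. \<Sum>b<(2::nat)^n. (mr0 p g s k a b)\<^sup>2)"
  have Q0: "Q \<ge> 0" by (simp add: Q_def sum_nonneg)
  have QC: "Q \<le> C\<^sup>2"
  proof -
    have "Q \<le> 4 * N / K" using Q_bound[of s k n] by (simp add: Q_def N_def K_def)
    also have "4 * N / K = (2 * N * (2 * K)) / (K * K)" using Kpos by (simp add: field_simps)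
    also have "\<dots> \<le> (2 * N * N) / (K * K)"
      using le2r Npos Kpos by (intro divide_right_mono mult_left_mono) auto
    also have "\<dots> = 8 / \<Delta>\<^sup>2" using Kpos Npos by (simp add: D field_simps power2_eq_square)
    also have "\<dots> \<le> (8 + 2 * \<Delta>\<^sup>2) / \<Delta>\<^sup>2" by (intro divide_right_mono) auto
    also have "\<dots> = C\<^sup>2" by (simp add: C_def power_divide)
    finally show ?thesis .
  qed
  define t where "t = sqrt (C\<^sup>2 - Q)"
  define v where "v = wv n p g s k t"
  have nv: "vnorm (4 ^ n + 1) v = C"
  proof -
    have "t\<^sup>2 = C\<^sup>2 - Q" using QC by (simp add: t_def)
    then have "t\<^sup>2 + Q = C\<^sup>2" by simp
    then show ?thesis using Cpos unfolding v_def wv_norm mr_sq Q_def[symmetric] by simp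
  qed
  define w where "w = (\<lambda>i. (1 / C) * v i)"
  have T: "\<Delta> / sqrt (8 + 2 * \<Delta>\<^sup>2) = 1 / C" by (simp add: C_def)
  have w': "(\<lambda>i. (sqrt (8 + 2 * \<Delta>\<^sup>2) / \<Delta>) * w i) = v"
    using Cpos by (auto simp: w_def C_def[symmetric])
  have nw: "vnorm (4 ^ n + 1) w = 1"
  proof -
    have "vnorm (4 ^ n + 1) w = (1 / C) * vnorm (4 ^ n + 1) v"
      unfolding w_def using Cpos by (intro vnorm_scale) simp
    then show ?thesis using Cpos nv by simp
  qed
  have vb: "\<bar>f_s p g s x * vinner (4 ^ n + 1) v (xtilde n p g k x)\<bar> \<le> 1" if "x \<in> {1..p-1}" for x
  proof -
    have "\<bar>f_s p g s x\<bar> = 1" using fs_pm[of p g s x] by auto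
    then show ?thesis using val_bound[OF that pn, of s k t] by (simp add: abs_mult v_def)
  qed
  have pv: "prob_units p (\<lambda>x. f_s p g s x * vinner (4 ^ n + 1) v (xtilde n p g k x) \<ge> 1) \<ge> 1 - \<Delta>"
  proof -
    have c: "N - 2 * K \<le> real (card {x \<in> {1..p-1}. 1 \<le> f_s p g s x * vinner (4 ^ n + 1) v (xtilde n p g k x)})"
      using prob_good[OF assms(2) assms(6) pn, of s t] by (simp add: v_def N_def K_def)
    have "1 - \<Delta> = (N - 2 * K) / N" using Npos by (simp add: D field_simps)
    also have "\<dots> \<le> real (card {x \<in> {1..p-1}. 1 \<le> f_s p g s x * vinner (4 ^ n + 1) v (xtilde n p g k x)}) / N"
      using c Npos by (intro divide_right_mono) auto
    finally show ?thesis by (simp add: prob_units_def N_def)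
  qed
  have eqw: "f_s p g s x * vinner (4 ^ n + 1) w (xtilde n p g k x) = (1 / C) * (f_s p g s x * vinner (4 ^ n + 1) v (xtilde n p g k x))" for x
    unfolding w_def vinner_scale by simp
  have pred: "(\<lambda>x. \<Delta> / sqrt (8 + 2 * \<Delta>\<^sup>2) \<le> f_s p g s x * vinner (4 ^ n + 1) w (xtilde n p g k x))
      = (\<lambda>x. 1 \<le> f_s p g s x * vinner (4 ^ n + 1) v (xtilde n p g k x))"
  proof (rule ext)
    fix x
    have "1 / C > 0" using Cpos by simp
    then show "(\<Delta> / sqrt (8 + 2 * \<Delta>\<^sup>2) \<le> f_s p g s x * vinner (4 ^ n + 1) w (xtilde n p g k x))
      = (1 \<le> f_s p g s x * vinner (4 ^ n + 1) v (xtilde n p g k x))"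
      unfolding T eqw using Cpos by (simp add: divide_le_cancel)
  qed
  have bw: "\<bar>f_s p g s x * vinner (4 ^ n + 1) w (xtilde n p g k x)\<bar> \<le> \<Delta> / sqrt (8 + 2 * \<Delta>\<^sup>2)" if "x \<in> {1..p-1}" for x
  proof -
    have "\<bar>f_s p g s x * vinner (4 ^ n + 1) w (xtilde n p g k x)\<bar> = (1 / C) * \<bar>f_s p g s x * vinner (4 ^ n + 1) v (xtilde n p g k x)\<bar>"
      unfolding eqw using Cpos by (simp add: abs_mult)
    also have "\<dots> \<le> (1 / C) * 1" using vb[OF that] Cpos by (intro mult_left_mono) auto
    finally show ?thesis unfolding T by simp
  qed
  have C10: "C \<le> sqrt 10 / \<Delta>"
  proof -
    have "sqrt (8 + 2 * \<Delta>\<^sup>2) \<le> sqrt 10" using D1 Dpos by (simp add: power_le_one)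
    then show ?thesis unfolding C_def using Dpos by (simp add: divide_right_mono)
  qed
  have A1: "\<forall>x \<in> {1..p - 1}. vnorm (4 ^ n + 1) (xtilde n p g k x) = 1"
    using part1[OF _ kp pn] by blast
  have A4: "\<forall>x \<in> {1..p - 1}. \<forall>x' \<in> {1..p - 1}.
          vinner (4 ^ n + 1) (xtilde n p g k x) (xtilde n p g k x')
            = (1 + (cmod (braket n p g k x x'))\<^sup>2) / 2"
    using part4 by blast
  have L: "let w' = (\<lambda>i. (sqrt (8 + 2 * \<Delta>\<^sup>2) / \<Delta>) * w i) in
               prob_units p (\<lambda>x. f_s p g s x * vinner (4 ^ n + 1) w' (xtilde n p g k x) \<ge> 1) \<ge> 1 - \<Delta>
             \<and> (\<forall>x \<in> {1..p - 1}. \<bar>f_s p g s x * vinner (4 ^ n + 1) w' (xtilde n p g k x)\<bar> \<le> 1)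
             \<and> vnorm (4 ^ n + 1) w' = sqrt (8 + 2 * \<Delta>\<^sup>2) / \<Delta>
             \<and> vnorm (4 ^ n + 1) w' \<le> sqrt 10 / \<Delta>"
    unfolding Let_def w'
  proof (intro conjI)
    show "1 - \<Delta> \<le> prob_units p (\<lambda>x. 1 \<le> f_s p g s x * vinner (4 ^ n + 1) v (xtilde n p g k x))" by (rule pv)
    show "\<forall>x\<in>{1..p - 1}. \<bar>f_s p g s x * vinner (4 ^ n + 1) v (xtilde n p g k x)\<bar> \<le> 1" using vb by blast
    show "vnorm (4 ^ n + 1) v = sqrt (8 + 2 * \<Delta>\<^sup>2) / \<Delta>" using nv by (simp add: C_def)
    show "vnorm (4 ^ n + 1) v \<le> sqrt 10 / \<Delta>" using nv C10 by simp
  qed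
  have A2: "\<exists>w. vnorm (4 ^ n + 1) w = 1
          \<and> prob_units p (\<lambda>x. f_s p g s x * vinner (4 ^ n + 1) w (xtilde n p g k x)
                               \<ge> \<Delta> / sqrt (8 + 2 * \<Delta>\<^sup>2)) \<ge> 1 - \<Delta>
          \<and> (\<forall>x \<in> {1..p - 1}. \<bar>f_s p g s x * vinner (4 ^ n + 1) w (xtilde n p g k x)\<bar>
                               \<le> \<Delta> / sqrt (8 + 2 * \<Delta>\<^sup>2))
          \<and> (let w' = (\<lambda>i. (sqrt (8 + 2 * \<Delta>\<^sup>2) / \<Delta>) * w i) in
               prob_units p (\<lambda>x. f_s p g s x * vinner (4 ^ n + 1) w' (xtilde n p g k x) \<ge> 1) \<ge> 1 - \<Delta>
             \<and> (\<forall>x \<in> {1..p - 1}. \<bar>f_s p g s x * vinner (4 ^ n + 1) w' (xtilde n p g k x)\<bar> \<le> 1)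
             \<and> vnorm (4 ^ n + 1) w' = sqrt (8 + 2 * \<Delta>\<^sup>2) / \<Delta>
             \<and> vnorm (4 ^ n + 1) w' \<le> sqrt 10 / \<Delta>)"
  proof (intro exI[of _ w] conjI)
    show "vnorm (4 ^ n + 1) w = 1" by (rule nw)
    show "1 - \<Delta> \<le> prob_units p (\<lambda>x. \<Delta> / sqrt (8 + 2 * \<Delta>\<^sup>2) \<le> f_s p g s x * vinner (4 ^ n + 1) w (xtilde n p g k x))"
      unfolding pred by (rule pv)
    show "\<forall>x \<in> {1..p - 1}. \<bar>f_s p g s x * vinner (4 ^ n + 1) w (xtilde n p g k x)\<bar> \<le> \<Delta> / sqrt (8 + 2 * \<Delta>\<^sup>2)"
      using bw by blast
  qed (rule L)
  show ?thesis using A1 A2 A4 by blast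
qed

end
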